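(* Let $f(w)=\sum_{n=0}^dc_nw^n$ be a polynomial with complex coefficients and, for $(i,j)\in J$, let $f(\ell_{i,j}^* ):=c_01_{i,j}+\sum_{n\ge1}c_n(\ell_{i,j}^* )^n$. Let $L=\sum_{(i,j)\in J}\ell_{i,j}$ and $\omega_k(z)=(1-zL)^{-1}e_{k,k}$ for $|z|$ small enough. Then for every $j$ with $(j,j)\in J$, $$f(\ell_{j,j}^* )\omega_j(z)=f(\alpha_{j,j}^2z)1_{j,j}\omega_j(z)+\alpha_{j,j}\,Df(\alpha_{j,j}^2z)\,\Omega,$$ where $Df(z)=\frac{f(z)-f(0)}{z}$; and for every off-diagonal $(i,j)\in J$ ($i\neq j$) and every $k$, $$f(\ell_{i,j}^* )\omega_k(z)=f(\alpha_{i,j}^2z)1_{i,j}\omega_k(z).$$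
   Context: Fock space. Let $J\subseteq\{1,2\}\times\{1,2\}$, $(\alpha_{i,j})_{(i,j)\in J}$ positive reals, $\{e_{i,j}:(i,j)\in J\}$ orthonormal vectors and $\mathcal{F}$ the full Fock space over $\bigoplus_{(i,j)\in J}\mathbb{C}e_{i,j}$ with vacuum $\Omega$. The strongly matricially free Fock space $\mathcal{N}\subseteq\mathcal{F}$ is the closed span of $\Omega$ and all simple tensors $e_{i_1,i_2}^{\otimes n_1}\otimes e_{i_2,i_3}^{\otimes n_2}\otimes\dots\otimes e_{i_{m-1},i_m}^{\otimes n_{m-1}}\otimes e_{i_m,i_m}^{\otimes n_m}$ ($m\ge1$, $n_k\ge1$, $i_1\neq\dots\neq i_m$, all pairs in $J$). With $P$ the projection onto $\mathcal{N}$ and $\ell(e)w=e\otimes w$, set $\ell_{i,j}=\alpha_{i,j}P\ell(e_{i,j})|_{\mathcal{N}}$ with adjoints $\ell_{i,j}^*$. Let $\mathcal{N}_{i,j}$ be the closed span of those simple tensors whose first factor is $e_{i,j}$; $1_{j,j}$ is the projection onto $\mathbb{C}\Omega\oplus\mathcal{N}_{j,j}$ and, for $i\ne j$, $1_{i,j}$ is the projection onto $\mathcal{N}\ominus(\mathbb{C}\Omega\oplus\mathcal{N}_{i,i})$. The vectors $e_{k,k}$ used in $\omega_k$ are those with $(k,k)\in J$. *)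

theory Defs
  imports "HOL-Analysis.Analysis" "HOL-Computational_Algebra.Polynomial"
begin

text \<open>Concrete model of the full Fock space over span{e_p : p in J}:
  vectors are coordinate functions on words (lists of letters p in J);
  the empty word is the vacuum Omega, the word [p1,...,pn] is e_p1 (x) ... (x) e_pn.\<close>

type_synonym fvec = "(nat \<times> nat) list \<Rightarrow> complex"

text \<open>Words spanning the strongly matricially free Fock space N (literal form
  e_{i1,i2}^n1 (x) e_{i2,i3}^n2 (x) ... (x) e_{im,im}^nm, consecutive indices distinct).\<close>
definition adm :: "(nat \<times> nat) set \<Rightarrow> (nat \<times> nat) list \<Rightarrow> bool" where
  "adm J w \<longleftrightarrow> w = [] \<or>
     (\<exists>is ns. is \<noteq> [] \<and> length ns = length is \<and> (\<forall>n\<in>set ns. n \<ge> 1) \<and>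
        (\<forall>k. k + 1 < length is \<longrightarrow> is ! k \<noteq> is ! (k + 1)) \<and>
        w = concat (map (\<lambda>k. replicate (ns ! k)
               (is ! k, if k + 1 < length is then is ! (k + 1) else is ! k)) [0..<length is]) \<and>
        set w \<subseteq> J)"

definition in_N :: "(nat \<times> nat) set \<Rightarrow> fvec \<Rightarrow> bool" where
  "in_N J v \<longleftrightarrow> (\<lambda>w. (cmod (v w))\<^sup>2) summable_on UNIV \<and> (\<forall>w. \<not> adm J w \<longrightarrow> v w = 0)"

definition basis_vec :: "(nat \<times> nat) list \<Rightarrow> fvec" where
  "basis_vec u = (\<lambda>w. if w = u then 1 else 0)"

text \<open>ell_p = alpha_p P ell(e_p) restricted to N, in coordinates.\<close>
definition lop :: "(nat \<times> nat) set \<Rightarrow> (nat \<times> nat \<Rightarrow> real) \<Rightarrow> nat \<times> nat \<Rightarrow> fvec \<Rightarrow> fvec" where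
  "lop J \<alpha> p v = (\<lambda>w. case w of [] \<Rightarrow> 0
      | a # w' \<Rightarrow> if a = p \<and> adm J w then complex_of_real (\<alpha> p) * v w' else 0)"

definition lstar :: "(nat \<times> nat \<Rightarrow> real) \<Rightarrow> nat \<times> nat \<Rightarrow> fvec \<Rightarrow> fvec" where
  "lstar \<alpha> p v = (\<lambda>w. complex_of_real (\<alpha> p) * v (p # w))"

definition Lop :: "(nat \<times> nat) set \<Rightarrow> (nat \<times> nat \<Rightarrow> real) \<Rightarrow> fvec \<Rightarrow> fvec" where
  "Lop J \<alpha> v = (\<lambda>w. \<Sum>p\<in>J. lop J \<alpha> p v w)"

definition proj :: "(nat \<times> nat) set \<Rightarrow> nat \<times> nat \<Rightarrow> fvec \<Rightarrow> fvec" where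
  "proj J p v = (\<lambda>w. if fst p = snd p
       then (if adm J w \<and> (w = [] \<or> hd w = p) then v w else 0)
       else (if adm J w \<and> w \<noteq> [] \<and> hd w \<noteq> (fst p, fst p) then v w else 0))"

definition resolv :: "(nat \<times> nat) set \<Rightarrow> (nat \<times> nat \<Rightarrow> real) \<Rightarrow> complex \<Rightarrow> fvec \<Rightarrow> fvec" where
  "resolv J \<alpha> z u = (THE v. in_N J v \<and> (\<lambda>w. v w - z * Lop J \<alpha> v w) = u)"

definition omega :: "(nat \<times> nat) set \<Rightarrow> (nat \<times> nat \<Rightarrow> real) \<Rightarrow> nat \<Rightarrow> complex \<Rightarrow> fvec" where
  "omega J \<alpha> k z = resolv J \<alpha> z (basis_vec [(k, k)])"

definition fl :: "(nat \<times> nat) set \<Rightarrow> (nat \<times> nat \<Rightarrow> real) \<Rightarrow> complex poly \<Rightarrow> nat \<times> nat \<Rightarrow> fvec \<Rightarrow> fvec" where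
  "fl J \<alpha> f p v = (\<lambda>w. coeff f 0 * proj J p v w +
      (\<Sum>n = 1..degree f. coeff f n * ((lstar \<alpha> p) ^^ n) v w))"

text \<open>Df(z) = (f(z) - f(0))/z, extended by continuity at 0 (the polynomial sum c_n z^(n-1)).\<close>
definition Df :: "complex poly \<Rightarrow> complex \<Rightarrow> complex" where
  "Df f z = (\<Sum>n = 1..degree f. coeff f n * z ^ (n - 1))"

end

theory Submission
  imports Defs
begin


fun build :: "nat list \<Rightarrow> nat list \<Rightarrow> (nat \<times> nat) list" where
  "build (i # i' # ks) (n # ns) = replicate n (i, i') @ build (i' # ks) ns"
| "build [i] (n # ns) = replicate n (i, i)"
| "build _ _ = []"

lemma concat_build:
  "length ns = length ks \<Longrightarrow>
   concat (map (\<lambda>k. replicate (ns ! k)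
               (ks ! k, if k + 1 < length ks then ks ! (k + 1) else ks ! k)) [0..<length ks]) = build ks ns"
proof (induction ks arbitrary: ns)
  case Nil then show ?case by simp
next
  case (Cons i ks')
  then obtain n ns' where ns: "ns = n # ns'" "length ns' = length ks'" by (cases ns) auto
  have up: "[0..<length (i # ks')] = 0 # map Suc [0..<length ks']"
    by (simp add: map_Suc_upt upt_conv_Cons del: upt_Suc)
  show ?case
  proof (cases ks')
    case Nil then show ?thesis using ns by simp
  next
    case (Cons i' ks'')
    have "concat (map (\<lambda>k. replicate (ns ! k)
               ((i#ks') ! k, if k + 1 < length (i#ks') then (i#ks') ! (k + 1) else (i#ks') ! k)) (map Suc [0..<length ks']))
      = concat (map (\<lambda>k. replicate (ns' ! k)
               (ks' ! k, if k + 1 < length ks' then ks' ! (k + 1) else ks' ! k)) [0..<length ks'])"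
      using ns by (auto simp add: comp_def simp del: add_Suc simp flip: Suc_eq_plus1 intro!: arg_cong[where f=concat] map_cong)
    also have "\<dots> = build ks' ns'" using Cons.IH ns by simp
    finally show ?thesis using ns up Cons by simp
  qed
qed

fun adm2 :: "(nat \<times> nat) set \<Rightarrow> (nat \<times> nat) list \<Rightarrow> bool" where
  "adm2 J [] = True"
| "adm2 J [a] = (a \<in> J \<and> fst a = snd a)"
| "adm2 J (a # b # x) = (a \<in> J \<and> adm2 J (b # x) \<and> (b = a \<or> (fst a \<noteq> snd a \<and> fst b = snd a)))"

lemma adm2_set: "adm2 J w \<Longrightarrow> set w \<subseteq> J"
  by (induction J w rule: adm2.induct) auto

lemma adm2_rep:
  "n \<ge> 1 \<Longrightarrow> adm2 J (replicate n a @ w) \<longleftrightarrow> a \<in> J \<and> (if w = [] then fst a = snd a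
     else adm2 J w \<and> (hd w = a \<or> (fst a \<noteq> snd a \<and> fst (hd w) = snd a)))"
proof (induction n rule: dec_induct)
  case base then show ?case by (cases w) auto
next
  case (step m)
  then obtain m' where "m = Suc m'" by (cases m) auto
  then show ?case using step by auto
qed

definition valid :: "nat list \<Rightarrow> nat list \<Rightarrow> bool" where
  "valid ks ns \<longleftrightarrow> ks \<noteq> [] \<and> length ns = length ks \<and> (\<forall>n\<in>set ns. n \<ge> 1) \<and>
        (\<forall>k. k + 1 < length ks \<longrightarrow> ks ! k \<noteq> ks ! (k + 1))"

lemma adj_cons: "(\<forall>k. k + 1 < length (i # i' # ks) \<longrightarrow> (i # i' # ks) ! k \<noteq> (i # i' # ks) ! (k + 1))
   \<longleftrightarrow> i \<noteq> i' \<and> (\<forall>k. k + 1 < length (i' # ks) \<longrightarrow> (i' # ks) ! k \<noteq> (i' # ks) ! (k + 1))"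
  (is "?L \<longleftrightarrow> ?R")
proof
  assume ?L
  then show ?R by (metis Suc_eq_plus1 add.commute length_Cons nat_add_left_cancel_less nth_Cons_Suc plus_1_eq_Suc
      zero_less_Suc nth_Cons_0 add_0)
next
  assume r: ?R
  show ?L
  proof (intro allI impI)
    fix k assume "k + 1 < length (i # i' # ks)"
    then show "(i # i' # ks) ! k \<noteq> (i # i' # ks) ! (k + 1)" using r by (cases k) auto
  qed
qed

lemma build_hd: "valid ks ns \<Longrightarrow> build ks ns \<noteq> [] \<and> hd (build ks ns) = (hd ks, case tl ks of [] \<Rightarrow> hd ks | i' # _ \<Rightarrow> i')"
proof (induction ks ns rule: build.induct)
  case (1 i i' ks n ns)
  then show ?case by (cases n) (auto simp: valid_def)
next
  case (2 i n ns)
  then show ?case by (cases n) (auto simp: valid_def)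
qed (auto simp: valid_def)

lemma valid_tl: "valid (i # i' # ks) (n # ns) \<Longrightarrow> valid (i' # ks) ns \<and> i \<noteq> i' \<and> n \<ge> 1"
  unfolding valid_def using adj_cons by auto

lemma build_adm2: "valid ks ns \<Longrightarrow> set (build ks ns) \<subseteq> J \<Longrightarrow> adm2 J (build ks ns)"
proof (induction ks ns rule: build.induct)
  case (1 i i' ks n ns)
  have v: "valid (i' # ks) ns" "i \<noteq> i'" "n \<ge> 1" using valid_tl[OF "1.prems"(1)] by auto
  have h: "build (i' # ks) ns \<noteq> [] \<and> fst (hd (build (i' # ks) ns)) = i'" using build_hd[OF v(1)] by simp
  have ih: "adm2 J (build (i' # ks) ns)" using 1 v by auto
  have "(i, i') \<in> J" using "1.prems"(2) v(3) by (cases n) auto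
  then show ?case using adm2_rep[OF v(3), of J "(i,i')" "build (i' # ks) ns"] h ih v by auto
next
  case (2 i n ns)
  then have "n \<ge> 1" by (auto simp: valid_def)
  moreover have "(i,i) \<in> J" using 2 calculation by (cases n) auto
  ultimately show ?case using adm2_rep[of n J "(i,i)" "[]"] by simp
qed (auto simp: valid_def)

lemma build_Suc: "build (i # ks) (Suc n # ns) = (i, case ks of [] \<Rightarrow> i | i' # _ \<Rightarrow> i') # build (i # ks) (n # ns)"
  by (cases ks) auto

lemma adm2_build: "adm2 J w \<Longrightarrow> w \<noteq> [] \<Longrightarrow> \<exists>ks ns. valid ks ns \<and> w = build ks ns"
proof (induction J w rule: adm2.induct)
  case (2 J a)
  then have "a = (fst a, fst a)" by (cases a) auto
  then have "[a] = build [fst a] [1]" by simp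
  moreover have "valid [fst a] [1]" by (simp add: valid_def)
  ultimately show ?case by blast
next
  case (3 J a b x)
  then obtain ks ns where v: "valid ks ns" and bx: "b # x = build ks ns" by auto
  from v obtain i ks' n ns' where isns: "ks = i # ks'" "ns = n # ns'" unfolding valid_def
    by (cases ks; cases ns) auto
  have "b = hd (build ks ns)" using bx by (metis list.sel(1))
  then have hb: "b = (i, case ks' of [] \<Rightarrow> i | i' # _ \<Rightarrow> i')"
    using build_hd[OF v] isns by (cases ks') auto
  show ?case
  proof (cases "b = a")
    case True
    have "a # b # x = build ks (Suc n # ns')" using build_Suc[of i ks' n ns'] bx isns hb True by simp
    moreover have "valid ks (Suc n # ns')" using v isns unfolding valid_def by auto
    ultimately show ?thesis by blast
  next
    case False
    then have a: "fst a \<noteq> snd a" "fst b = snd a" using 3 by auto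
    have ai: "a = (fst a, i)" using a hb by (cases a) auto
    have "build (fst a # ks) (1 # ns) = [(fst a, i)] @ build ks ns" using isns by simp
    then have "a # b # x = build (fst a # ks) (1 # ns)" using bx ai by simp
    moreover have "valid (fst a # ks) (1 # ns)" using v isns a hb adj_cons[of "fst a" i ks'] unfolding valid_def
      by auto
    ultimately show ?thesis by blast
  qed
qed auto

lemma adm_eq: "adm J w = adm2 J w"
proof
  assume "adm J w"
  then show "adm2 J w" unfolding adm_def
  proof (elim disjE exE conjE)
    fix ks ns assume *: "ks \<noteq> []" "length ns = length ks" "\<forall>n\<in>set ns. 1 \<le> n"
      "\<forall>k. k + 1 < length ks \<longrightarrow> ks ! k \<noteq> ks ! (k + 1)" and w: "w = concat (map (\<lambda>k. replicate (ns ! k)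
               (ks ! k, if k + 1 < length ks then ks ! (k + 1) else ks ! k)) [0..<length ks])" and s: "set w \<subseteq> J"
    have "w = build ks ns" using w concat_build *(2) by simp
    then show ?thesis using build_adm2[of ks ns J] * s unfolding valid_def by simp
  qed simp
next
  assume a: "adm2 J w"
  show "adm J w"
  proof (cases "w = []")
    case True then show ?thesis by (simp add: adm_def)
  next
    case False
    then obtain ks ns where ve: "valid ks ns" and wb: "w = build ks ns" using adm2_build a by blast
    from ve have v1: "ks \<noteq> []" "length ns = length ks" "\<forall>n\<in>set ns. 1 \<le> n"
      "\<forall>k. k + 1 < length ks \<longrightarrow> ks ! k \<noteq> ks ! (k + 1)" unfolding valid_def by auto
    have wc: "w = concat (map (\<lambda>k. replicate (ns ! k)
               (ks ! k, if k + 1 < length ks then ks ! (k + 1) else ks ! k)) [0..<length ks])"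
      using concat_build[OF v1(2)] wb by simp
    have sj: "set w \<subseteq> J" by (rule adm2_set[OF a])
    show ?thesis unfolding adm_def
      apply (rule disjI2)
      apply (rule exI[where x=ks])
      apply (rule exI[where x=ns])
      using v1 wc sj by (intro conjI)
  qed
qed



definition Ev :: "(nat \<times> nat) set \<Rightarrow> (nat \<times> nat \<Rightarrow> real) \<Rightarrow> nat \<Rightarrow> complex \<Rightarrow> fvec" where
  "Ev J \<alpha> k z w = (if adm2 J w \<and> w \<noteq> [] \<and> last w = (k, k)
     then z ^ (length w - 1) * prod_list (map (\<lambda>p. complex_of_real (\<alpha> p)) (butlast w)) else 0)"

lemma Lop_nil: "Lop J \<alpha> v [] = 0"
  by (simp add: Lop_def lop_def)

lemma Lop_cons: assumes "finite J"
  shows "Lop J \<alpha> v (a # w) = (if adm2 J (a # w) then complex_of_real (\<alpha> a) * v w else 0)"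
proof -
  have "Lop J \<alpha> v (a # w) = (\<Sum>p\<in>J. if p = a then (if adm2 J (a # w) then complex_of_real (\<alpha> a) * v w else 0) else 0)"
    unfolding Lop_def by (rule sum.cong) (auto simp: lop_def adm_eq)
  also have "\<dots> = (if a \<in> J then (if adm2 J (a # w) then complex_of_real (\<alpha> a) * v w else 0) else 0)"
    by (rule sum.delta[OF assms])
  also have "\<dots> = (if adm2 J (a # w) then complex_of_real (\<alpha> a) * v w else 0)"
    using adm2_set[of J "a # w"] by auto
  finally show ?thesis .
qed

lemma Ev_eq: assumes "finite J" "(k, k) \<in> J"
  shows "(\<lambda>w. Ev J \<alpha> k z w - z * Lop J \<alpha> (Ev J \<alpha> k z) w) = basis_vec [(k, k)]"
proof
  fix w
  show "Ev J \<alpha> k z w - z * Lop J \<alpha> (Ev J \<alpha> k z) w = basis_vec [(k, k)] w"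
  proof (cases w)
    case Nil then show ?thesis by (simp add: Ev_def Lop_nil basis_vec_def)
  next
    case (Cons a w')
    show ?thesis
    proof (cases "adm2 J (a # w')")
      case False
      then have "a # w' \<noteq> [(k, k)]" using assms by auto
      then show ?thesis using False Cons by (simp add: Ev_def Lop_cons[OF assms(1)] basis_vec_def)
    next
      case True
      show ?thesis
      proof (cases w')
        case Nil then show ?thesis using True Cons by (simp add: Ev_def Lop_cons[OF assms(1)] basis_vec_def)
      next
        case (Cons b x)
        have "adm2 J (b # x)" using True Cons by simp
        then show ?thesis using True Cons \<open>w = a # w'\<close>
          by (simp add: Ev_def Lop_cons[OF assms(1)] basis_vec_def)
      qed
    qed
  qed
qed

lemma uniq:
  assumes "finite J" "\<And>w. v w - z * Lop J \<alpha> v w = u w" "\<And>w. v' w - z * Lop J \<alpha> v' w = u w"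
  shows "v = v'"
proof
  fix w show "v w = v' w"
  proof (induction w)
    case Nil then show ?case using assms(2,3)[of "[]"] by (simp add: Lop_nil)
  next
    case (Cons a w)
    then show ?case using assms(2,3)[of "a # w"] by (auto simp add: Lop_cons[OF assms(1)] diff_eq_eq)
  qed
qed

definition A0 :: "(nat \<times> nat) set" where "A0 = {1, 2} \<times> {1, 2}"

lemma geom_bound: "(\<Sum>n\<le>N. (1/2::real)^n) \<le> 2"
proof -
  have "(\<Sum>n\<le>N. (1/2::real)^n) \<le> (\<Sum>n. (1/2::real)^n)"
    by (rule sum_le_suminf) (auto intro: summable_geometric)
  also have "\<dots> = 2" by (subst suminf_geometric) auto
  finally show ?thesis .
qed

lemma lists_sum_bound:
  shows "(\<Sum>w\<in>{w. set w \<subseteq> A0 \<and> length w \<le> N}. (1/8::real)^length w) \<le> 2"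
proof -
  have fA: "finite A0" and cA: "card A0 = 4" by (auto simp: A0_def card_cartesian_product)
  have eq: "{w. set w \<subseteq> A0 \<and> length w \<le> N} = (\<Union>n\<in>{..N}. {w. set w \<subseteq> A0 \<and> length w = n})" by auto
  have "(\<Sum>w\<in>{w. set w \<subseteq> A0 \<and> length w \<le> N}. (1/8::real)^length w)
      = (\<Sum>n\<le>N. \<Sum>w\<in>{w. set w \<subseteq> A0 \<and> length w = n}. (1/8::real)^length w)"
    unfolding eq by (rule sum.UNION_disjoint) (auto intro: finite_lists_length_eq[OF fA])
  also have "\<dots> = (\<Sum>n\<le>N. (1/2::real)^n)"
  proof (rule sum.cong[OF refl])
    fix n
    have "(\<Sum>w\<in>{w. set w \<subseteq> A0 \<and> length w = n}. (1/8::real)^length w)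
        = (\<Sum>w\<in>{w. set w \<subseteq> A0 \<and> length w = n}. (1/8::real)^n)" by (rule sum.cong) auto
    also have "\<dots> = real (card A0 ^ n) * (1/8)^n" by (simp add: card_lists_length_eq[OF fA])
    also have "\<dots> = (4 * (1/8::real))^n" unfolding cA of_nat_power power_mult_distrib by simp
    also have "\<dots> = (1/2)^n" by simp
    finally show "(\<Sum>w\<in>{w. set w \<subseteq> A0 \<and> length w = n}. (1/8::real)^length w) = (1/2)^n" .
  qed
  also have "\<dots> \<le> 2" by (rule geom_bound)
  finally show ?thesis .
qed

definition gdom :: "(nat \<times> nat) list \<Rightarrow> real" where
  "gdom w = (if set w \<subseteq> A0 then 8 * (1/8)^length w else 0)"

lemma gdom_summable: "gdom summable_on UNIV"
proof (rule nonneg_bdd_above_summable_on)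
  show "\<And>x. x \<in> UNIV \<Longrightarrow> 0 \<le> gdom x" by (simp add: gdom_def)
  show "bdd_above (sum gdom ` {F. F \<subseteq> UNIV \<and> finite F})"
  proof (rule bdd_aboveI2)
    fix F assume "F \<in> {F. F \<subseteq> (UNIV :: (nat \<times> nat) list set) \<and> finite F}"
    then have fF: "finite F" by simp
    define N where "N = Max (length ` F)"
    have lN: "\<And>w. w \<in> F \<Longrightarrow> length w \<le> N" unfolding N_def using fF by auto
    define S where "S = {w. set w \<subseteq> A0 \<and> length w \<le> N}"
    have fA: "finite A0" by (simp add: A0_def)
    have fS: "finite S" unfolding S_def by (rule finite_lists_length_le[OF fA])
    have "sum gdom F = sum gdom (F \<inter> S) + sum gdom (F - S)" by (rule sum.Int_Diff[OF fF])
    also have "sum gdom (F - S) = 0" by (rule sum.neutral) (auto simp: gdom_def S_def lN)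
    also have "sum gdom (F \<inter> S) \<le> sum gdom S" by (rule sum_mono2[OF fS]) (auto simp: gdom_def)
    also have "sum gdom S = 8 * (\<Sum>w\<in>S. (1/8::real)^length w)"
      by (simp add: sum_distrib_left gdom_def S_def)
    also have "\<dots> \<le> 16" using lists_sum_bound[of N] unfolding S_def by simp
    finally show "sum gdom F \<le> 16" by simp
  qed
qed

lemma prod_bound:
  assumes "\<And>p. p \<in> set xs \<Longrightarrow> 0 \<le> \<alpha> p \<and> \<alpha> p \<le> M"
  shows "cmod (prod_list (map (\<lambda>p. complex_of_real (\<alpha> p)) xs)) \<le> M ^ length xs"
  using assms
proof (induction xs)
  case Nil then show ?case by simp
next
  case (Cons a xs)
  have h: "0 \<le> \<alpha> a" "\<alpha> a \<le> M" using Cons.prems by auto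
  have ih: "cmod (prod_list (map (\<lambda>p. complex_of_real (\<alpha> p)) xs)) \<le> M ^ length xs" using Cons by auto
  have "cmod (prod_list (map (\<lambda>p. complex_of_real (\<alpha> p)) (a # xs)))
      = \<alpha> a * cmod (prod_list (map (\<lambda>p. complex_of_real (\<alpha> p)) xs))"
    using h by (simp add: norm_mult)
  also have "\<dots> \<le> M * M ^ length xs" by (rule mult_mono[OF h(2) ih]) (use h in auto)
  finally show ?case by simp
qed

lemma Ev_in_N:
  assumes JA: "J \<subseteq> A0" and pos: "\<forall>p\<in>J. \<alpha> p > 0"
    and z: "cmod z < 1 / (8 * (1 + (\<Sum>p\<in>J. \<alpha> p)))"
  shows "in_N J (Ev J \<alpha> k z)"
  unfolding in_N_def
proof
  define M where "M = 1 + (\<Sum>p\<in>J. \<alpha> p)"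
  have fJ: "finite J" by (rule finite_subset[OF JA]) (simp add: A0_def)
  have apos: "\<And>p. p \<in> J \<Longrightarrow> 0 \<le> \<alpha> p" by (rule order_less_imp_le) (use pos in blast)
  have s0: "0 \<le> (\<Sum>p\<in>J. \<alpha> p)" by (rule sum_nonneg) (rule apos)
  have Mpos: "M \<ge> 1" unfolding M_def using s0 by linarith
  have aM: "\<And>p. p \<in> J \<Longrightarrow> 0 \<le> \<alpha> p \<and> \<alpha> p \<le> M"
  proof -
    fix p assume p: "p \<in> J"
    have "\<alpha> p \<le> (\<Sum>p\<in>J. \<alpha> p)" by (rule member_le_sum[OF p _ fJ]) (rule apos, simp)
    then show "0 \<le> \<alpha> p \<and> \<alpha> p \<le> M" using apos[OF p] unfolding M_def by linarith
  qed
  have z': "cmod z < 1 / (8 * M)" using z unfolding M_def .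
  have M0: "8 * M > 0" using Mpos by linarith
  have c1: "cmod z * (8 * M) < 1" using pos_less_divide_eq[OF M0, of "cmod z" 1] z' by blast
  have e8: "cmod z * (8 * M) = 8 * (cmod z * M)" by (rule mult.left_commute)
  have zM: "cmod z * M \<le> 1/8" using c1 unfolding e8 by linarith
  show "(\<lambda>w. (cmod (Ev J \<alpha> k z w))\<^sup>2) summable_on UNIV"
  proof (rule summable_on_comparison_test[OF gdom_summable])
    fix w :: "(nat \<times> nat) list"
    show "0 \<le> (cmod (Ev J \<alpha> k z w))\<^sup>2" by simp
    show "(cmod (Ev J \<alpha> k z w))\<^sup>2 \<le> gdom w"
    proof (cases "adm2 J w \<and> w \<noteq> [] \<and> last w = (k, k)")
      case False
      have "Ev J \<alpha> k z w = 0" unfolding Ev_def by (rule if_not_P[OF False])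
      then show ?thesis by (simp add: gdom_def)
    next
      case True
      have sw: "set w \<subseteq> J" using True adm2_set by blast
      have wn: "w \<noteq> []" using True by blast
      define n where "n = length w - 1"
      have ln: "length w = Suc n" using wn unfolding n_def by (cases w) auto
      have "cmod (Ev J \<alpha> k z w) = cmod z ^ n * cmod (prod_list (map (\<lambda>p. complex_of_real (\<alpha> p)) (butlast w)))"
      proof -
        have "Ev J \<alpha> k z w = z ^ n * prod_list (map (\<lambda>p. complex_of_real (\<alpha> p)) (butlast w))"
          unfolding Ev_def n_def by (rule if_P[OF True])
        then show ?thesis by (simp only: norm_mult norm_power)
      qed
      also have "\<dots> \<le> cmod z ^ n * M ^ n"
      proof (rule mult_left_mono)
        have bw: "\<And>p. p \<in> set (butlast w) \<Longrightarrow> 0 \<le> \<alpha> p \<and> \<alpha> p \<le> M"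
        proof -
          fix p assume "p \<in> set (butlast w)"
          then have "p \<in> set w" by (rule in_set_butlastD)
          then have "p \<in> J" using sw by (rule subsetD[rotated])
          then show "0 \<le> \<alpha> p \<and> \<alpha> p \<le> M" by (rule aM)
        qed
        from prod_bound[of "butlast w" \<alpha> M, OF bw] show "cmod (prod_list (map (\<lambda>p. complex_of_real (\<alpha> p)) (butlast w))) \<le> M ^ n"
          using ln by simp
      qed simp
      also have "\<dots> = (cmod z * M) ^ n" by (simp add: power_mult_distrib)
      also have "\<dots> \<le> (1/8) ^ n" by (rule power_mono[OF zM]) (use Mpos in \<open>simp add: zero_le_mult_iff\<close>)
      finally have b: "cmod (Ev J \<alpha> k z w) \<le> (1/8) ^ n" .
      have "(cmod (Ev J \<alpha> k z w))\<^sup>2 \<le> ((1/8) ^ n)\<^sup>2" by (rule power_mono[OF b]) simp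
      also have "\<dots> \<le> (1/8::real) ^ n" unfolding power2_eq_square
        by (rule mult_left_le_one_le) (auto simp: power_le_one)
      also have "\<dots> = gdom w"
      proof -
        have "set w \<subseteq> A0" using sw JA by (rule subset_trans)
        then show ?thesis using ln by (simp add: gdom_def)
      qed
      finally show ?thesis .
    qed
  qed
  show "\<forall>w. \<not> adm J w \<longrightarrow> Ev J \<alpha> k z w = 0" by (simp add: Ev_def adm_eq)
qed



lemma lstar_pow: "((lstar \<alpha> p) ^^ n) v w = complex_of_real (\<alpha> p) ^ n * v (replicate n p @ w)"
proof (induction n arbitrary: w)
  case 0 then show ?case by simp
next
  case (Suc n)
  have "((lstar \<alpha> p) ^^ Suc n) v w = complex_of_real (\<alpha> p) * ((lstar \<alpha> p) ^^ n) v (p # w)"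
    by (simp add: lstar_def)
  also have "\<dots> = complex_of_real (\<alpha> p) ^ Suc n * v (replicate (Suc n) p @ w)"
    using Suc by (simp add: replicate_app_Cons_same)
  finally show ?case .
qed

lemma Ev_rep:
  assumes "n \<ge> 1" "w \<noteq> []" "adm2 J (replicate n p @ w)"
  shows "Ev J \<alpha> k z (replicate n p @ w) = (z * complex_of_real (\<alpha> p)) ^ n * Ev J \<alpha> k z w"
proof -
  have aw: "adm2 J w" using adm2_rep[OF assms(1), of J p w] assms by simp
  obtain m where lw: "length w = Suc m" using assms(2) by (cases w) auto
  have l: "last (replicate n p @ w) = last w" using assms(2) by simp
  have bl: "butlast (replicate n p @ w) = replicate n p @ butlast w" using assms(2) by (simp add: butlast_append)
  have len: "length (replicate n p @ w) - 1 = n + m" using lw by simp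
  have ne: "replicate n p @ w \<noteq> []" using assms(2) by simp
  define P where "P = prod_list (map (\<lambda>p. complex_of_real (\<alpha> p)) (butlast w))"
  have pm: "prod_list (map (\<lambda>p. complex_of_real (\<alpha> p)) (replicate n p @ butlast w))
     = complex_of_real (\<alpha> p) ^ n * P" unfolding P_def by simp
  show ?thesis
  proof (cases "last w = (k, k)")
    case True
    have e1: "Ev J \<alpha> k z (replicate n p @ w) = z ^ (n + m) * (complex_of_real (\<alpha> p) ^ n * P)"
      unfolding Ev_def l bl len pm using assms(3) ne True by (simp only: simp_thms if_True)
    have e2: "Ev J \<alpha> k z w = z ^ m * P"
      unfolding Ev_def P_def using aw assms(2) True lw by simp
    show ?thesis unfolding e1 e2 by (simp only: power_add power_mult_distrib mult_ac)
  next
    case False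
    have e1: "Ev J \<alpha> k z (replicate n p @ w) = 0" unfolding Ev_def l using False by simp
    have e2: "Ev J \<alpha> k z w = 0" unfolding Ev_def using False by simp
    show ?thesis unfolding e1 e2 by simp
  qed
qed

lemma Ev_rep0:
  assumes "n \<ge> 1" "w \<noteq> []" "\<not> adm2 J (replicate n p @ w)"
  shows "Ev J \<alpha> k z (replicate n p @ w) = 0"
  using assms by (simp add: Ev_def)

lemma Ev_rep_nil:
  assumes "p \<in> J" "fst p = snd p"
  shows "Ev J \<alpha> (fst p) z (replicate (Suc m) p) = z ^ m * complex_of_real (\<alpha> p) ^ m"
proof -
  have a: "adm2 J (replicate (Suc m) p)" using adm2_rep[of "Suc m" J p "[]"] assms by simp
  have b: "butlast (replicate (Suc m) p) = replicate m p"
    by (induction m) auto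
  have p: "p = (fst p, fst p)" using assms by (cases p) auto
  show ?thesis using a b p by (simp add: Ev_def last_replicate)
qed

lemma diag_term:
  assumes pJ: "(j, j) \<in> J" and n: "n \<ge> 1"
  shows "complex_of_real (\<alpha> (j, j)) ^ n * Ev J \<alpha> j z (replicate n (j, j) @ w)
    = (complex_of_real (\<alpha> (j, j)) ^ 2 * z) ^ n * proj J (j, j) (Ev J \<alpha> j z) w
      + (if w = [] then complex_of_real (\<alpha> (j, j)) * (complex_of_real (\<alpha> (j, j)) ^ 2 * z) ^ (n - 1) else 0)"
proof (cases "w = []")
  case True
  obtain m where nm: "n = Suc m" using n by (cases n) auto
  have e: "Ev J \<alpha> j z (replicate (Suc m) (j, j) @ []) = z ^ m * complex_of_real (\<alpha> (j, j)) ^ m"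
    using Ev_rep_nil[of "(j, j)" J \<alpha> z m] pJ by simp
  have p0: "proj J (j, j) (Ev J \<alpha> j z) [] = 0" by (simp add: proj_def Ev_def)
  show ?thesis unfolding True nm e p0
    by (simp only: simp_thms if_True mult_zero_right mult_zero_left add_0_left diff_Suc_1 power_Suc power_mult_distrib power2_eq_square mult_ac)
next
  case False
  have iff: "adm2 J (replicate n (j, j) @ w) \<longleftrightarrow> adm2 J w \<and> hd w = (j, j)"
    using adm2_rep[OF n, of J "(j, j)" w] pJ False by auto
  have pr: "proj J (j, j) (Ev J \<alpha> j z) w = (if adm2 J w \<and> hd w = (j, j) then Ev J \<alpha> j z w else 0)"
    using False by (simp add: proj_def adm_eq)
  show ?thesis
  proof (cases "adm2 J w \<and> hd w = (j, j)")
    case True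
    have e1: "Ev J \<alpha> j z (replicate n (j,j) @ w) = (z * complex_of_real (\<alpha> (j,j))) ^ n * Ev J \<alpha> j z w"
      by (rule Ev_rep[OF n False]) (use iff True in blast)
    have e2: "proj J (j,j) (Ev J \<alpha> j z) w = Ev J \<alpha> j z w" unfolding pr by (rule if_P[OF True])
    show ?thesis unfolding e1 e2 using False
      by (simp only: if_False power_mult_distrib power2_eq_square mult_ac add_0_right)
  next
    case F: False
    have na: "\<not> adm2 J (replicate n (j,j) @ w)" using iff F by blast
    have e1: "Ev J \<alpha> j z (replicate n (j,j) @ w) = 0" by (rule Ev_rep0[OF n False na])
    have e2: "proj J (j,j) (Ev J \<alpha> j z) w = 0" unfolding pr by (rule if_not_P[OF F])
    show ?thesis unfolding e1 e2 using False by (simp only: if_False mult_zero_right add_0_right)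
  qed
qed

lemma off_term:
  assumes JA: "J \<subseteq> A0" and pJ: "(i, j) \<in> J" and ij: "i \<noteq> j" and n: "n \<ge> 1"
  shows "complex_of_real (\<alpha> (i, j)) ^ n * Ev J \<alpha> k z (replicate n (i, j) @ w)
    = (complex_of_real (\<alpha> (i, j)) ^ 2 * z) ^ n * proj J (i, j) (Ev J \<alpha> k z) w"
proof (cases "w = []")
  case True
  have "\<not> adm2 J (replicate n (i, j))" using adm2_rep[OF n, of J "(i, j)" "[]"] ij by simp
  then have e: "Ev J \<alpha> k z (replicate n (i, j)) = 0" by (simp add: Ev_def)
  have p0: "proj J (i, j) (Ev J \<alpha> k z) [] = 0" using ij by (simp add: proj_def)
  show ?thesis using True e p0 by simp
next
  case False
  have key: "adm2 J w \<Longrightarrow> (hd w = (i, j) \<or> fst (hd w) = j) \<longleftrightarrow> hd w \<noteq> (i, i)"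
  proof -
    assume "adm2 J w"
    then have "hd w \<in> J" using adm2_set False hd_in_set by blast
    then have "hd w \<in> A0" "(i, j) \<in> A0" using JA pJ by auto
    then show "(hd w = (i, j) \<or> fst (hd w) = j) \<longleftrightarrow> hd w \<noteq> (i, i)" using ij
      by (cases "hd w") (auto simp: A0_def)
  qed
  have iff: "adm2 J (replicate n (i, j) @ w) \<longleftrightarrow> adm2 J w \<and> hd w \<noteq> (i, i)"
    using adm2_rep[OF n, of J "(i, j)" w] pJ False ij key by auto
  have pr: "proj J (i, j) (Ev J \<alpha> k z) w = (if adm2 J w \<and> hd w \<noteq> (i, i) then Ev J \<alpha> k z w else 0)"
    using False ij by (simp add: proj_def adm_eq)
  show ?thesis
  proof (cases "adm2 J w \<and> hd w \<noteq> (i, i)")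
    case True
    have e1: "Ev J \<alpha> k z (replicate n (i,j) @ w) = (z * complex_of_real (\<alpha> (i,j))) ^ n * Ev J \<alpha> k z w"
      by (rule Ev_rep[OF n False]) (use iff True in blast)
    have e2: "proj J (i,j) (Ev J \<alpha> k z) w = Ev J \<alpha> k z w" unfolding pr by (rule if_P[OF True])
    show ?thesis unfolding e1 e2 using False
      by (simp only: if_False power_mult_distrib power2_eq_square mult_ac add_0_right)
  next
    case F: False
    have na: "\<not> adm2 J (replicate n (i,j) @ w)" using iff F by blast
    have e1: "Ev J \<alpha> k z (replicate n (i,j) @ w) = 0" by (rule Ev_rep0[OF n False na])
    have e2: "proj J (i,j) (Ev J \<alpha> k z) w = 0" unfolding pr by (rule if_not_P[OF F])
    show ?thesis unfolding e1 e2 using False by (simp only: if_False mult_zero_right add_0_right)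
  qed
qed

lemma fl_eval: "fl J \<alpha> f p v w = coeff f 0 * proj J p v w +
   (\<Sum>n = 1..degree f. coeff f n * (complex_of_real (\<alpha> p) ^ n * v (replicate n p @ w)))"
  by (simp add: fl_def lstar_pow)

lemma poly_split: "poly f (x::complex) = coeff f 0 + (\<Sum>n = 1..degree f. coeff f n * x ^ n)"
proof -
  have e: "{..degree f} = insert 0 {1..degree f}" by auto
  show ?thesis unfolding poly_altdef e by simp
qed

lemma fl_diag:
  assumes "(j, j) \<in> J"
  shows "fl J \<alpha> f (j, j) (Ev J \<alpha> j z) w =
     poly f (complex_of_real ((\<alpha> (j, j))\<^sup>2) * z) * proj J (j, j) (Ev J \<alpha> j z) w
             + complex_of_real (\<alpha> (j, j)) * Df f (complex_of_real ((\<alpha> (j, j))\<^sup>2) * z) * basis_vec [] w"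
proof -
  define a where "a = complex_of_real (\<alpha> (j, j))"
  define x where "x = a ^ 2 * z"
  define P where "P = proj J (j, j) (Ev J \<alpha> j z) w"
  have xx: "complex_of_real ((\<alpha> (j, j))\<^sup>2) * z = x" unfolding x_def a_def by simp
  have "fl J \<alpha> f (j, j) (Ev J \<alpha> j z) w = coeff f 0 * P +
      (\<Sum>n = 1..degree f. coeff f n * (x ^ n * P + (if w = [] then a * x ^ (n - 1) else 0)))"
    unfolding fl_eval P_def x_def a_def
    by (rule arg_cong2[where f="(+)"], simp, rule sum.cong, simp, simp add: diag_term[OF assms])
  also have "\<dots> = (coeff f 0 + (\<Sum>n = 1..degree f. coeff f n * x ^ n)) * P
      + (if w = [] then a * Df f x else 0)"
    by (simp add: algebra_simps sum.distrib sum_distrib_left sum_distrib_right Df_def)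
  also have "\<dots> = poly f x * P + a * Df f x * basis_vec [] w"
    by (simp add: poly_split basis_vec_def)
  finally show ?thesis unfolding xx P_def a_def .
qed

lemma fl_off:
  assumes "J \<subseteq> A0" "(i, j) \<in> J" "i \<noteq> j"
  shows "fl J \<alpha> f (i, j) (Ev J \<alpha> k z) w =
     poly f (complex_of_real ((\<alpha> (i, j))\<^sup>2) * z) * proj J (i, j) (Ev J \<alpha> k z) w"
proof -
  define a where "a = complex_of_real (\<alpha> (i, j))"
  define x where "x = a ^ 2 * z"
  define P where "P = proj J (i, j) (Ev J \<alpha> k z) w"
  have xx: "complex_of_real ((\<alpha> (i, j))\<^sup>2) * z = x" unfolding x_def a_def by simp
  have "fl J \<alpha> f (i, j) (Ev J \<alpha> k z) w = coeff f 0 * P +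
      (\<Sum>n = 1..degree f. coeff f n * (x ^ n * P))"
    unfolding fl_eval P_def x_def a_def
    by (rule arg_cong2[where f="(+)"], simp, rule sum.cong, simp, simp add: off_term[OF assms])
  also have "\<dots> = poly f x * P"
    by (simp add: poly_split algebra_simps sum_distrib_left)
  finally show ?thesis unfolding xx P_def a_def .
qed

theorem proposition6p1:
  fixes J :: "(nat \<times> nat) set" and \<alpha> :: "nat \<times> nat \<Rightarrow> real" and f :: "complex poly"
  assumes "J \<subseteq> {1, 2} \<times> {1, 2}"
    and "\<forall>p\<in>J. \<alpha> p > 0"
  shows "\<exists>r > 0. \<forall>z. cmod z < r \<longrightarrow>
     (\<forall>k. (k, k) \<in> J \<longrightarrow>
        (\<exists>!v. in_N J v \<and> (\<lambda>w. v w - z * Lop J \<alpha> v w) = basis_vec [(k, k)])) \<and>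
     (\<forall>j. (j, j) \<in> J \<longrightarrow>
        fl J \<alpha> f (j, j) (omega J \<alpha> j z) =
        (\<lambda>w. poly f (complex_of_real ((\<alpha> (j, j))\<^sup>2) * z) * proj J (j, j) (omega J \<alpha> j z) w
             + complex_of_real (\<alpha> (j, j)) * Df f (complex_of_real ((\<alpha> (j, j))\<^sup>2) * z)
               * basis_vec [] w)) \<and>
     (\<forall>i j k. (i, j) \<in> J \<and> i \<noteq> j \<and> (k, k) \<in> J \<longrightarrow>
        fl J \<alpha> f (i, j) (omega J \<alpha> k z) =
        (\<lambda>w. poly f (complex_of_real ((\<alpha> (i, j))\<^sup>2) * z) * proj J (i, j) (omega J \<alpha> k z) w))"
proof -
  have JA: "J \<subseteq> A0" using assms(1) by (simp add: A0_def)
  have fJ: "finite J" by (rule finite_subset[OF JA]) (simp add: A0_def)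
  define r where "r = 1 / (8 * (1 + (\<Sum>p\<in>J. \<alpha> p)))"
  have apos: "\<And>p. p \<in> J \<Longrightarrow> 0 \<le> \<alpha> p" by (rule order_less_imp_le) (use assms(2) in blast)
  have s0: "0 \<le> (\<Sum>p\<in>J. \<alpha> p)" by (rule sum_nonneg) (rule apos)
  have rpos: "r > 0" unfolding r_def using s0 by simp
  have main: "\<forall>z. cmod z < r \<longrightarrow>
     (\<forall>k. (k, k) \<in> J \<longrightarrow>
        (\<exists>!v. in_N J v \<and> (\<lambda>w. v w - z * Lop J \<alpha> v w) = basis_vec [(k, k)])) \<and>
     (\<forall>j. (j, j) \<in> J \<longrightarrow>
        fl J \<alpha> f (j, j) (omega J \<alpha> j z) =
        (\<lambda>w. poly f (complex_of_real ((\<alpha> (j, j))\<^sup>2) * z) * proj J (j, j) (omega J \<alpha> j z) w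
             + complex_of_real (\<alpha> (j, j)) * Df f (complex_of_real ((\<alpha> (j, j))\<^sup>2) * z)
               * basis_vec [] w)) \<and>
     (\<forall>i j k. (i, j) \<in> J \<and> i \<noteq> j \<and> (k, k) \<in> J \<longrightarrow>
        fl J \<alpha> f (i, j) (omega J \<alpha> k z) =
        (\<lambda>w. poly f (complex_of_real ((\<alpha> (i, j))\<^sup>2) * z) * proj J (i, j) (omega J \<alpha> k z) w))"
  proof (intro allI impI)
    fix z assume z: "cmod z < r"
    have inN: "\<And>k. in_N J (Ev J \<alpha> k z)"
      by (rule Ev_in_N[OF JA assms(2)]) (use z in \<open>simp add: r_def\<close>)
    have eqk: "\<And>k. (k, k) \<in> J \<Longrightarrow> (\<lambda>w. Ev J \<alpha> k z w - z * Lop J \<alpha> (Ev J \<alpha> k z) w) = basis_vec [(k, k)]"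
      by (rule Ev_eq[OF fJ])
    have un: "\<And>k v. (k, k) \<in> J \<Longrightarrow> (\<lambda>w. v w - z * Lop J \<alpha> v w) = basis_vec [(k, k)] \<Longrightarrow> v = Ev J \<alpha> k z"
    proof -
      fix k v assume k: "(k, k) \<in> J" and v: "(\<lambda>w. v w - z * Lop J \<alpha> v w) = basis_vec [(k, k)]"
      show "v = Ev J \<alpha> k z"
        by (rule uniq[OF fJ, where u="basis_vec [(k, k)]"], rule fun_cong[OF v], rule fun_cong[OF eqk[OF k]])
    qed
    have om: "\<And>k. (k, k) \<in> J \<Longrightarrow> omega J \<alpha> k z = Ev J \<alpha> k z"
    proof -
      fix k assume k: "(k, k) \<in> J"
      show "omega J \<alpha> k z = Ev J \<alpha> k z" unfolding omega_def resolv_def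
      proof (rule the_equality)
        show "in_N J (Ev J \<alpha> k z) \<and> (\<lambda>w. Ev J \<alpha> k z w - z * Lop J \<alpha> (Ev J \<alpha> k z) w) = basis_vec [(k, k)]"
          using inN eqk[OF k] by blast
        fix v assume "in_N J v \<and> (\<lambda>w. v w - z * Lop J \<alpha> v w) = basis_vec [(k, k)]"
        then show "v = Ev J \<alpha> k z" using un[OF k] by blast
      qed
    qed
    show "(\<forall>k. (k, k) \<in> J \<longrightarrow>
        (\<exists>!v. in_N J v \<and> (\<lambda>w. v w - z * Lop J \<alpha> v w) = basis_vec [(k, k)])) \<and>
     (\<forall>j. (j, j) \<in> J \<longrightarrow>
        fl J \<alpha> f (j, j) (omega J \<alpha> j z) =
        (\<lambda>w. poly f (complex_of_real ((\<alpha> (j, j))\<^sup>2) * z) * proj J (j, j) (omega J \<alpha> j z) w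
             + complex_of_real (\<alpha> (j, j)) * Df f (complex_of_real ((\<alpha> (j, j))\<^sup>2) * z)
               * basis_vec [] w)) \<and>
     (\<forall>i j k. (i, j) \<in> J \<and> i \<noteq> j \<and> (k, k) \<in> J \<longrightarrow>
        fl J \<alpha> f (i, j) (omega J \<alpha> k z) =
        (\<lambda>w. poly f (complex_of_real ((\<alpha> (i, j))\<^sup>2) * z) * proj J (i, j) (omega J \<alpha> k z) w))"
    proof (intro conjI allI impI)
      fix k assume k: "(k, k) \<in> J"
      show "\<exists>!v. in_N J v \<and> (\<lambda>w. v w - z * Lop J \<alpha> v w) = basis_vec [(k, k)]"
      proof (rule ex1I[where a="Ev J \<alpha> k z"])
        show "in_N J (Ev J \<alpha> k z) \<and> (\<lambda>w. Ev J \<alpha> k z w - z * Lop J \<alpha> (Ev J \<alpha> k z) w) = basis_vec [(k, k)]"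
          using inN eqk[OF k] by blast
        fix v assume "in_N J v \<and> (\<lambda>w. v w - z * Lop J \<alpha> v w) = basis_vec [(k, k)]"
        then show "v = Ev J \<alpha> k z" using un[OF k] by blast
      qed
    next
      fix j assume j: "(j, j) \<in> J"
      show "fl J \<alpha> f (j, j) (omega J \<alpha> j z) =
        (\<lambda>w. poly f (complex_of_real ((\<alpha> (j, j))\<^sup>2) * z) * proj J (j, j) (omega J \<alpha> j z) w
             + complex_of_real (\<alpha> (j, j)) * Df f (complex_of_real ((\<alpha> (j, j))\<^sup>2) * z)
               * basis_vec [] w)"
        unfolding om[OF j] by (rule ext) (rule fl_diag[OF j])
    next
      fix i j k assume h: "(i, j) \<in> J \<and> i \<noteq> j \<and> (k, k) \<in> J"
      show "fl J \<alpha> f (i, j) (omega J \<alpha> k z) =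
        (\<lambda>w. poly f (complex_of_real ((\<alpha> (i, j))\<^sup>2) * z) * proj J (i, j) (omega J \<alpha> k z) w)"
        unfolding om[OF conjunct2[OF conjunct2[OF h]]]
        by (rule ext) (rule fl_off[OF JA conjunct1[OF h] conjunct1[OF conjunct2[OF h]]])
    qed
  qed
  show ?thesis by (rule exI[where x=r], rule conjI[OF rpos main])
qed


end
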